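(* Let $d$ be an integer and let $b,\alpha,\beta\in\mathbb{Z}_{\ge0}^n$ satisfy $\alpha_1\le\cdots\le\alpha_n=d$, $\beta_1\le\cdots\le\beta_n=d$, $\alpha_i\le\beta_i$ for all $i$, $\alpha_1=0$ and $\beta_1=b_1$. Let $I\subseteq S=K[x_1,\ldots,x_n]$ be the ideal generated by all monomials $x^u$ with $u\in\mathbb{Z}_{\ge0}^n$, $0\le u_i\le b_i$ and $\alpha_i\le u_1+\cdots+u_i\le\beta_i$ for $i=1,\ldots,n$. Then $\mathrm{depth}(S/I)=0$ if and only if all of the following hold: (i) $b_i\ge1$ for all $i=1,\ldots,n$; (ii) $\alpha_i\le\beta_i-1$ for $i=2,\ldots,n-1$; (iii) $\beta_i+b_{i+1}+\cdots+b_j\ge\alpha_j+j-i+1$ for all $1\le i\le j\le n-1$; (iv) $\beta_i+b_{i+1}+\cdots+b_n\ge d+n-i$ for all $1\le i\le n$.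
   Context: $K$ is a field. $I$ is a polymatroidal ideal (a basic PLP-polymatroidal ideal of type $(\mathbf{0},b\mid\alpha,\beta)$), generated in degree $d$. *)

theory Defs
  imports Main "HOL-Library.Poly_Mapping"
begin

text \<open>Polynomials over a field 'k in variables x_i (i :: nat): a monomial x^u is an
  finitely supported exponent vector u; a polynomial maps monomials to coefficients.\<close>
type_synonym 'k mpoly = "(nat \<Rightarrow>\<^sub>0 nat) \<Rightarrow>\<^sub>0 'k"

definition polyring :: "nat \<Rightarrow> 'k::field mpoly set" where
  "polyring n = {p. \<forall>m\<in>Poly_Mapping.keys p. Poly_Mapping.keys m \<subseteq> {1..n}}"

definition monom :: "(nat \<Rightarrow>\<^sub>0 nat) \<Rightarrow> 'k::field mpoly" where
  "monom u = Poly_Mapping.single u 1"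

inductive_set ideal_gen :: "nat \<Rightarrow> 'k::field mpoly set \<Rightarrow> 'k mpoly set"
  for n :: nat and G :: "'k mpoly set" where
  zero: "0 \<in> ideal_gen n G"
| step: "\<lbrakk>g \<in> G; q \<in> polyring n; p \<in> ideal_gen n G\<rbrakk> \<Longrightarrow> q * g + p \<in> ideal_gen n G"

definition max_ideal :: "nat \<Rightarrow> 'k::field mpoly set" where
  "max_ideal n = {p \<in> polyring n. Poly_Mapping.lookup p 0 = 0}"

text \<open>depth(S/I) = 0: S/I is nonzero and m contains no S/I-regular element,
  i.e. every element of m is a zero divisor on S/I.\<close>
definition depth_zero :: "nat \<Rightarrow> 'k::field mpoly set \<Rightarrow> bool" where
  "depth_zero n I \<longleftrightarrow> (1::'k mpoly) \<notin> I \<and>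
     (\<forall>f\<in>max_ideal n. \<exists>g\<in>polyring n. g \<notin> I \<and> f * g \<in> I)"

definition plp_ideal :: "nat \<Rightarrow> (nat \<Rightarrow> nat) \<Rightarrow> (nat \<Rightarrow> nat) \<Rightarrow> (nat \<Rightarrow> nat) \<Rightarrow> 'k::field mpoly set" where
  "plp_ideal n b \<alpha> \<beta> = ideal_gen n
     {monom u | u. Poly_Mapping.keys u \<subseteq> {1..n} \<and>
        (\<forall>i\<in>{1..n}. Poly_Mapping.lookup u i \<le> b i \<and>
           \<alpha> i \<le> (\<Sum>k=1..i. Poly_Mapping.lookup u k) \<and>
           (\<Sum>k=1..i. Poly_Mapping.lookup u k) \<le> \<beta> i)}"

end

theory Submission
  imports Defs
begin



definition dvm :: "(nat \<Rightarrow>\<^sub>0 nat) \<Rightarrow> (nat \<Rightarrow>\<^sub>0 nat) \<Rightarrow> bool" where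
  "dvm u m \<longleftrightarrow> (\<forall>j. Poly_Mapping.lookup u j \<le> Poly_Mapping.lookup m j)"

definition Up :: "(nat \<Rightarrow>\<^sub>0 nat) set \<Rightarrow> (nat \<Rightarrow>\<^sub>0 nat) set" where
  "Up A = {m. \<exists>u\<in>A. dvm u m}"

lemma dvm_trans: "dvm u m \<Longrightarrow> dvm m m' \<Longrightarrow> dvm u m'"
  unfolding dvm_def by (meson le_trans)

lemma Up_mono: "m \<in> Up A \<Longrightarrow> dvm m m' \<Longrightarrow> m' \<in> Up A"
proof -
  assume "m \<in> Up A" "dvm m m'"
  then obtain u where "u \<in> A" "dvm u m" unfolding Up_def by blast
  then show ?thesis using dvm_trans[OF _ \<open>dvm m m'\<close>] unfolding Up_def by blast
qed

lemma dvm_add: "dvm m (m + a)" "dvm m (a + m)"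
  unfolding dvm_def by (auto simp: lookup_add)

lemma Up_add: "m \<in> Up A \<Longrightarrow> m + a \<in> Up A" "m \<in> Up A \<Longrightarrow> a + m \<in> Up A"
  using Up_mono dvm_add by blast+

lemma keys_add_nat: "Poly_Mapping.keys (a + b :: nat \<Rightarrow>\<^sub>0 nat) = Poly_Mapping.keys a \<union> Poly_Mapping.keys b"
  by (auto simp: in_keys_iff lookup_add)

lemma polyring_mult:
  assumes "p \<in> polyring n" "q \<in> polyring n"
  shows "p * q \<in> polyring n"
proof -
  have "Poly_Mapping.keys m \<subseteq> {1..n}" if "m \<in> Poly_Mapping.keys (p * q)" for m
  proof -
    from that keys_mult obtain a b where "m = a + b" "a \<in> Poly_Mapping.keys p" "b \<in> Poly_Mapping.keys q"
      by blast
    then show ?thesis using assms unfolding polyring_def by (auto simp: keys_add_nat)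
  qed
  then show ?thesis unfolding polyring_def by blast
qed

lemma polyring_add:
  assumes "p \<in> polyring n" "q \<in> polyring n"
  shows "p + q \<in> polyring n"
  using assms keys_add[of p q] unfolding polyring_def by blast

lemma polyring_single: "Poly_Mapping.keys m \<subseteq> {1..n} \<Longrightarrow> Poly_Mapping.single m c \<in> polyring n"
  unfolding polyring_def by auto

lemma ideal_gen_add: "p \<in> ideal_gen n G \<Longrightarrow> q \<in> ideal_gen n G \<Longrightarrow> p + q \<in> ideal_gen n G"
proof (induction p rule: ideal_gen.induct)
  case zero then show ?case by simp
next
  case (step g r p)
  then have "r * g + (p + q) \<in> ideal_gen n G" by (intro ideal_gen.step) auto
  then show ?case by (simp add: add.assoc)
qed

lemma ideal_gen_sum: "finite S \<Longrightarrow> (\<And>x. x \<in> S \<Longrightarrow> h x \<in> ideal_gen n G) \<Longrightarrow> sum h S \<in> ideal_gen n G"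
  by (induction S rule: finite_induct) (auto intro: ideal_gen_add ideal_gen.zero)

lemma poly_sum_single: "p = (\<Sum>m\<in>Poly_Mapping.keys p. Poly_Mapping.single m (Poly_Mapping.lookup p m))"
proof (rule poly_mapping_eqI)
  fix k
  show "Poly_Mapping.lookup p k = Poly_Mapping.lookup (\<Sum>m\<in>Poly_Mapping.keys p. Poly_Mapping.single m (Poly_Mapping.lookup p m)) k"
    by (simp add: lookup_sum lookup_single when_def in_keys_iff)
qed

context
  fixes n :: nat and A :: "(nat \<Rightarrow>\<^sub>0 nat) set"
  assumes A: "\<And>u. u \<in> A \<Longrightarrow> Poly_Mapping.keys u \<subseteq> {1..n}"
begin

lemma L1:
  assumes "p \<in> ideal_gen n (monom ` A :: 'k::field mpoly set)"
  shows "Poly_Mapping.keys p \<subseteq> Up A \<and> p \<in> polyring n"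
  using assms
proof (induction p rule: ideal_gen.induct)
  case zero then show ?case by (simp add: polyring_def)
next
  case (step g q p)
  then obtain u where u: "u \<in> A" "g = monom u" by auto
  have gp: "g \<in> polyring n" using u A unfolding monom_def by (simp add: polyring_single)
  have "Poly_Mapping.keys (q * g) \<subseteq> Up A"
  proof
    fix m assume "m \<in> Poly_Mapping.keys (q * g)"
    with keys_mult obtain a b where "m = a + b" "b \<in> Poly_Mapping.keys g" by blast
    then have "m = a + u" using u by (auto simp: monom_def)
    then show "m \<in> Up A" using u(1) dvm_add unfolding Up_def by blast
  qed
  then have k: "Poly_Mapping.keys (q * g + p) \<subseteq> Up A"
    using keys_add[of "q * g" p] step.IH by blast
  have "q * g \<in> polyring n" using polyring_mult step.hyps(2) gp by blast
  then have "q * g + p \<in> polyring n" using polyring_add step.IH by blast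
  then show ?case using k by simp
qed

lemma L2:
  assumes "p \<in> polyring n" "Poly_Mapping.keys p \<subseteq> Up A"
  shows "p \<in> ideal_gen n (monom ` A :: 'k::field mpoly set)"
proof -
  have "Poly_Mapping.single m (Poly_Mapping.lookup p m) \<in> ideal_gen n (monom ` A :: 'k::field mpoly set)"
    if m: "m \<in> Poly_Mapping.keys p" for m
  proof -
    from m assms obtain u where u: "u \<in> A" "dvm u m" unfolding Up_def by blast
    have km: "Poly_Mapping.keys m \<subseteq> {1..n}" using m assms(1) unfolding polyring_def by blast
    have e: "m = (m - u) + u"
      using u(2) by (intro poly_mapping_eqI) (auto simp: lookup_add lookup_minus dvm_def)
    have k2: "Poly_Mapping.keys (m - u) \<subseteq> {1..n}"
      using km by (auto simp: in_keys_iff lookup_minus)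
    have "Poly_Mapping.single m (Poly_Mapping.lookup p m) =
       Poly_Mapping.single (m - u) (Poly_Mapping.lookup p m) * monom u + 0"
      unfolding monom_def by (subst mult_single) (simp add: e[symmetric])
    also have "\<dots> \<in> ideal_gen n (monom ` A)"
      using u(1) k2 by (intro ideal_gen.step ideal_gen.zero polyring_single) auto
    finally show ?thesis .
  qed
  then have *: "(\<Sum>m\<in>Poly_Mapping.keys p. Poly_Mapping.single m (Poly_Mapping.lookup p m)) \<in> ideal_gen n (monom ` A :: 'k::field mpoly set)"
    by (intro ideal_gen_sum) auto
  have eq: "(\<Sum>m\<in>Poly_Mapping.keys p. Poly_Mapping.single m (Poly_Mapping.lookup p m)) = p"
    by (rule poly_sum_single[symmetric])
  show ?thesis using * unfolding eq .
qed

end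



abbreviation ee :: "nat \<Rightarrow> (nat \<Rightarrow>\<^sub>0 nat)" where "ee i \<equiv> Poly_Mapping.single i 1"

lemma lookup_single_mult:
  "Poly_Mapping.lookup (Poly_Mapping.single (a::nat \<Rightarrow>\<^sub>0 nat) (c::'k::field) * g) (a + m) = c * Poly_Mapping.lookup g m"
  by (simp add: lookup_mult lookup_single when_mult)

lemma keys_single_mult:
  "Poly_Mapping.keys (Poly_Mapping.single (a::nat \<Rightarrow>\<^sub>0 nat) (c::'k::field) * g) \<subseteq> (+) a ` Poly_Mapping.keys g"
  using keys_mult[of "Poly_Mapping.single a c" g] by (auto split: if_splits)

lemma ee_nz: "ee i \<noteq> 0"
  by (metis lookup_single_eq lookup_zero one_neq_zero)

lemma iter:
  fixes g :: "'k::field mpoly"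
  assumes "g \<in> polyring n" "\<not> Poly_Mapping.keys g \<subseteq> Up A"
    "Poly_Mapping.keys ((\<Sum>i\<in>{1..n}. monom (ee i)) * g) \<subseteq> Up A"
  shows "\<exists>w. Poly_Mapping.keys w \<subseteq> {1..n} \<and> w \<notin> Up A \<and> (\<forall>i\<in>{1..n}. w + ee i \<in> Up A)"
  using assms
proof (induction "card (Poly_Mapping.keys g - Up A)" arbitrary: g rule: less_induct)
  case less
  define f :: "'k mpoly" where "f = (\<Sum>i\<in>{1..n}. monom (ee i))"
  note fg = less.prems(3)[folded f_def]
  show ?case
  proof (cases "\<exists>i\<in>{1..n}. \<not> Poly_Mapping.keys (monom (ee i) * g) \<subseteq> Up A")
    case True
    then obtain i where i: "i \<in> {1..n}" "\<not> Poly_Mapping.keys (monom (ee i) * g) \<subseteq> Up A" by blast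
    define X where "X = Poly_Mapping.keys g - Up A"
    have Xf: "finite X" "X \<noteq> {}" using less.prems(2) unfolding X_def by auto
    have "Max ((\<lambda>m. Poly_Mapping.lookup m i) ` X) \<in> (\<lambda>m. Poly_Mapping.lookup m i) ` X"
      by (rule Max_in) (use Xf in auto)
    then obtain ws where ws1: "ws \<in> X" and wsm: "Poly_Mapping.lookup ws i = Max ((\<lambda>m. Poly_Mapping.lookup m i) ` X)"
      by auto
    have ws2: "Poly_Mapping.lookup m i \<le> Poly_Mapping.lookup ws i" if "m \<in> X" for m
      unfolding wsm using that Xf by (intro Max_ge) auto
    have wsU: "ws + ee i \<in> Up A"
    proof (rule ccontr)
      assume nU: "ws + ee i \<notin> Up A"
      have z: "Poly_Mapping.lookup (monom (ee j) * g) (ws + ee i) = 0" if j: "j \<in> {1..n}" "j \<noteq> i" for j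
      proof (rule ccontr)
        assume "Poly_Mapping.lookup (monom (ee j) * g) (ws + ee i) \<noteq> 0"
        then have "ws + ee i \<in> Poly_Mapping.keys (monom (ee j) * g)" by (simp add: in_keys_iff)
        then obtain m where m: "m \<in> Poly_Mapping.keys g" "ws + ee i = ee j + m"
          using keys_single_mult[of "ee j" 1 g] unfolding monom_def by blast
        have "m \<notin> Up A"
        proof
          assume "m \<in> Up A"
          then have "ee j + m \<in> Up A" by (rule Up_add(2))
          then show False using nU m(2) by simp
        qed
        then have "m \<in> X" using m(1) X_def by simp
        moreover have "Poly_Mapping.lookup m i = Poly_Mapping.lookup ws i + 1"
        proof -
          have "Poly_Mapping.lookup (ws + ee i) i = Poly_Mapping.lookup (ee j + m) i" using m(2) by simp
          then show ?thesis using j(2) by (simp add: lookup_add lookup_single)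
        qed
        ultimately show False using ws2[of m] by simp
      qed
      have "Poly_Mapping.lookup (f * g) (ws + ee i) = (\<Sum>j\<in>{1..n}. Poly_Mapping.lookup (monom (ee j) * g) (ws + ee i))"
        unfolding f_def by (simp add: sum_distrib_right lookup_sum)
      also have "\<dots> = Poly_Mapping.lookup (monom (ee i) * g) (ws + ee i)"
      proof -
        have "(\<Sum>j\<in>{1..n}-{i}. Poly_Mapping.lookup (monom (ee j) * g) (ws + ee i)) = 0"
          by (rule sum.neutral) (use z in blast)
        then show ?thesis by (subst sum.remove[OF _ i(1)]) simp_all
      qed
      also have "\<dots> = Poly_Mapping.lookup g ws"
        unfolding monom_def using lookup_single_mult[of "ee i" 1 g ws] by (simp add: add.commute)
      finally have "Poly_Mapping.lookup (f * g) (ws + ee i) \<noteq> 0" using ws1 X_def by (simp add: in_keys_iff)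
      then have "ws + ee i \<in> Poly_Mapping.keys (f * g)" by (simp add: in_keys_iff)
      then show False using fg nU by blast
    qed
    define g' where "g' = monom (ee i) * g"
    have g'p: "g' \<in> polyring n" unfolding g'_def monom_def using i(1) less.prems(1)
      by (intro polyring_mult polyring_single) auto
    have g'n: "\<not> Poly_Mapping.keys g' \<subseteq> Up A" using i(2) g'_def by simp
    have "f * g' = monom (ee i) * (f * g)" unfolding g'_def by (simp add: mult.left_commute)
    then have g'f: "Poly_Mapping.keys (f * g') \<subseteq> Up A"
    proof -
      assume eq: "f * g' = monom (ee i) * (f * g)"
      show ?thesis
      proof
        fix m assume "m \<in> Poly_Mapping.keys (f * g')"
        then have "m \<in> Poly_Mapping.keys (Poly_Mapping.single (ee i) 1 * (f * g))" using eq unfolding monom_def by simp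
        then obtain m0 where m0: "m0 \<in> Poly_Mapping.keys (f * g)" "m = ee i + m0"
          using keys_single_mult[of "ee i" 1 "f * g"] by blast
        have "m0 \<in> Up A" using fg m0(1) by blast
        then show "m \<in> Up A" using Up_add(2)[of m0 A "ee i"] m0(2) by simp
      qed
    qed
    have sub: "Poly_Mapping.keys g' - Up A \<subseteq> (+) (ee i) ` (X - {ws})"
    proof
      fix m' assume m': "m' \<in> Poly_Mapping.keys g' - Up A"
      then obtain m where m: "m \<in> Poly_Mapping.keys g" "m' = ee i + m"
        using keys_single_mult[of "ee i" 1 g] unfolding g'_def monom_def by blast
      have "m \<notin> Up A"
      proof
        assume "m \<in> Up A"
        then have "ee i + m \<in> Up A" by (rule Up_add(2))
        then show False using m' m(2) by simp
      qed
      moreover have "m \<noteq> ws" using m' m wsU by (auto simp: add.commute)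
      ultimately show "m' \<in> (+) (ee i) ` (X - {ws})" using m X_def by blast
    qed
    have "card (Poly_Mapping.keys g' - Up A) \<le> card ((+) (ee i) ` (X - {ws}))"
      by (rule card_mono) (use Xf sub in auto)
    also have "\<dots> \<le> card (X - {ws})" by (rule card_image_le) (use Xf in auto)
    also have "\<dots> < card X" using Xf ws1 by (meson card_Diff1_less)
    finally have lt: "card (Poly_Mapping.keys g' - Up A) < card (Poly_Mapping.keys g - Up A)"
      using X_def by simp
    show ?thesis using less.hyps[OF lt g'p g'n g'f[unfolded f_def]] .
  next
    case False
    obtain w where w: "w \<in> Poly_Mapping.keys g" "w \<notin> Up A" using less.prems(2) by blast
    have "Poly_Mapping.keys w \<subseteq> {1..n}" using w(1) less.prems(1) unfolding polyring_def by blast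
    moreover have "w + ee i \<in> Up A" if "i \<in> {1..n}" for i
    proof -
      have "Poly_Mapping.lookup (monom (ee i) * g) (ee i + w) = Poly_Mapping.lookup g w"
        unfolding monom_def using lookup_single_mult[of "ee i" 1 g w] by simp
      then have "ee i + w \<in> Poly_Mapping.keys (monom (ee i) * g :: 'k mpoly)" using w(1) by (simp add: in_keys_iff)
      moreover have "Poly_Mapping.keys (monom (ee i) * g :: 'k mpoly) \<subseteq> Up A" using False that by blast
      ultimately have "ee i + w \<in> Up A" by blast
      then show ?thesis by (simp add: add.commute)
    qed
    ultimately show ?thesis using w(2) by blast
  qed
qed




lemma ee_nz2: "Poly_Mapping.single (i::nat) (Suc 0) \<noteq> 0"
  using ee_nz[of i] by simp

context
  fixes n :: nat and A :: "(nat \<Rightarrow>\<^sub>0 nat) set"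
  assumes A: "\<And>u. u \<in> A \<Longrightarrow> Poly_Mapping.keys u \<subseteq> {1..n}"
begin

lemma depth_iff:
  "depth_zero n (ideal_gen n (monom ` A) :: 'k::field mpoly set) \<longleftrightarrow>
    (1::'k mpoly) \<notin> ideal_gen n (monom ` A) \<and>
    (\<exists>w. Poly_Mapping.keys w \<subseteq> {1..n} \<and> w \<notin> Up A \<and> (\<forall>i\<in>{1..n}. w + ee i \<in> Up A))"
  (is "?L \<longleftrightarrow> ?R")
proof
  assume L: ?L
  define f :: "'k mpoly" where "f = (\<Sum>i\<in>{1..n}. monom (ee i))"
  have fpoly: "f \<in> polyring n"
    unfolding polyring_def mem_Collect_eq
  proof (intro ballI)
    fix m assume "m \<in> Poly_Mapping.keys f"
    then obtain i where "i \<in> {1..n}" "m \<in> Poly_Mapping.keys (monom (ee i) :: 'k mpoly)"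
      using keys_sum[of "\<lambda>i. monom (ee i) :: 'k mpoly" "{1..n}"] unfolding f_def by blast
    then show "Poly_Mapping.keys m \<subseteq> {1..n}" by (simp add: monom_def)
  qed
  have f0: "Poly_Mapping.lookup f 0 = 0"
    unfolding f_def by (simp add: lookup_sum monom_def lookup_single ee_nz ee_nz2 when_def)
  have fm: "f \<in> max_ideal n" unfolding max_ideal_def using fpoly f0 by simp
  obtain g where g: "g \<in> polyring n" "g \<notin> ideal_gen n (monom ` A)" "f * g \<in> ideal_gen n (monom ` A)"
    using L fm unfolding depth_zero_def by blast
  have k1: "Poly_Mapping.keys (f * g) \<subseteq> Up A" using L1[OF A g(3)] by blast
  have k2: "\<not> Poly_Mapping.keys g \<subseteq> Up A" using L2[OF A g(1)] g(2) by blast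
  have "\<exists>w. Poly_Mapping.keys w \<subseteq> {1..n} \<and> w \<notin> Up A \<and> (\<forall>i\<in>{1..n}. w + ee i \<in> Up A)"
    by (rule iter[OF g(1) k2 k1[unfolded f_def]])
  then show ?R using L unfolding depth_zero_def by blast
next
  assume R: ?R
  then obtain w where w: "Poly_Mapping.keys w \<subseteq> {1..n}" "w \<notin> Up A" "\<forall>i\<in>{1..n}. w + ee i \<in> Up A"
    by blast
  have one: "(1::'k mpoly) \<notin> ideal_gen n (monom ` A)" using R by blast
  show ?L unfolding depth_zero_def
  proof (intro conjI ballI)
    show "(1::'k mpoly) \<notin> ideal_gen n (monom ` A)" by (rule one)
    fix f :: "'k mpoly" assume f: "f \<in> max_ideal n"
    let ?g = "monom w :: 'k mpoly"
    have gp: "?g \<in> polyring n" unfolding monom_def by (rule polyring_single[OF w(1)])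
    have gn: "?g \<notin> ideal_gen n (monom ` A)"
    proof
      assume "?g \<in> ideal_gen n (monom ` A)"
      then have "Poly_Mapping.keys ?g \<subseteq> Up A" using L1[OF A] by blast
      then show False using w(2) by (simp add: monom_def)
    qed
    have "f * ?g \<in> ideal_gen n (monom ` A)"
    proof (rule L2[OF A])
      show "f * ?g \<in> polyring n" using f gp polyring_mult unfolding max_ideal_def by blast
      show "Poly_Mapping.keys (f * ?g) \<subseteq> Up A"
      proof
        fix m assume "m \<in> Poly_Mapping.keys (f * ?g)"
        then obtain a where a: "a \<in> Poly_Mapping.keys f" "m = a + w"
          using keys_mult[of f ?g] by (auto simp: monom_def)
        have "a \<noteq> 0" using a(1) f unfolding max_ideal_def by (auto simp: in_keys_iff)
        then obtain i where i: "i \<in> Poly_Mapping.keys a" by (metis keys_eq_empty ex_in_conv)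
        have "i \<in> {1..n}" using i a(1) f unfolding max_ideal_def polyring_def by blast
        then have "w + ee i \<in> Up A" using w(3) by blast
        moreover have "dvm (w + ee i) m" unfolding dvm_def a(2)
          using i by (auto simp: lookup_add lookup_single when_def in_keys_iff)
        ultimately show "m \<in> Up A" by (rule Up_mono)
      qed
    qed
    then show "\<exists>g\<in>polyring n. g \<notin> ideal_gen n (monom ` A) \<and> f * g \<in> ideal_gen n (monom ` A)"
      using gp gn by blast
  qed
qed

end



definition Gs :: "nat \<Rightarrow> (nat \<Rightarrow> nat) \<Rightarrow> (nat \<Rightarrow> nat) \<Rightarrow> (nat \<Rightarrow> nat) \<Rightarrow> (nat \<Rightarrow>\<^sub>0 nat) set" where
  "Gs n b \<alpha> \<beta> = {u. Poly_Mapping.keys u \<subseteq> {1..n} \<and>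
        (\<forall>i\<in>{1..n}. Poly_Mapping.lookup u i \<le> b i \<and>
           \<alpha> i \<le> (\<Sum>k=1..i. Poly_Mapping.lookup u k) \<and>
           (\<Sum>k=1..i. Poly_Mapping.lookup u k) \<le> \<beta> i)}"

lemma sum_split: "a \<le> Suc k \<Longrightarrow> k \<le> i \<Longrightarrow> sum f {a..i} = sum f {a..k} + sum f {Suc k..i}"
proof -
  assume "a \<le> Suc k" "k \<le> i"
  then have "{a..i} = {a..k} \<union> {Suc k..i}" by auto
  then show ?thesis by (simp add: sum.union_disjoint)
qed

definition mk :: "(nat \<Rightarrow> nat) \<Rightarrow> nat \<Rightarrow> (nat \<Rightarrow>\<^sub>0 nat)" where
  "mk f n = Abs_poly_mapping (\<lambda>l. if l \<in> {1..n} then f l else 0)"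

lemma lookup_mk: "Poly_Mapping.lookup (mk f n) l = (if l \<in> {1..n} then f l else 0)"
proof -
  have "finite {l. (if l \<in> {1..n} then f l else 0) \<noteq> (0::nat)}"
    by (rule finite_subset[of _ "{1..n}"]) auto
  then show ?thesis unfolding mk_def by simp
qed

lemma keys_mk: "Poly_Mapping.keys (mk f n) \<subseteq> {1..n}"
  by (auto simp: in_keys_iff lookup_mk split: if_splits)

lemma sum_mk: "i \<le> n \<Longrightarrow> (\<Sum>k=1..i. Poly_Mapping.lookup (mk f n) k) = (\<Sum>k=1..i. f k)"
  by (rule sum.cong) (auto simp: lookup_mk)

lemma tele: "(\<And>k. 1 \<le> k \<Longrightarrow> k \<le> (i::nat) \<Longrightarrow> S (k - 1) \<le> (S k :: nat)) \<Longrightarrow>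
    S 0 + (\<Sum>k=1..i. S k - S (k - 1)) = S i"
proof (induction i)
  case 0 then show ?case by simp
next
  case (Suc i)
  have IH: "S 0 + (\<Sum>k=1..i. S k - S (k - 1)) = S i"
    by (rule Suc.IH) (rule Suc.prems; simp)
  have m: "S i \<le> S (Suc i)" using Suc.prems[of "Suc i"] by simp
  have "(\<Sum>k=1..Suc i. S k - S (k - 1)) = (\<Sum>k=1..i. S k - S (k - 1)) + (S (Suc i) - S i)"
    by simp
  then show ?case using IH m by linarith
qed

primrec gS :: "(nat \<Rightarrow> nat) \<Rightarrow> (nat \<Rightarrow> nat) \<Rightarrow> nat \<Rightarrow> nat" where
  "gS \<beta> c 0 = 0"
| "gS \<beta> c (Suc i) = min (\<beta> (Suc i)) (gS \<beta> c i + c (Suc i))"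

lemma gS_repr: "gS \<beta> c i = (\<Sum>l=1..i. c l) \<or>
   (\<exists>k. 1 \<le> k \<and> k \<le> i \<and> gS \<beta> c i = \<beta> k + (\<Sum>l=k+1..i. c l))"
proof (induction i)
  case 0 then show ?case by simp
next
  case (Suc i)
  show ?case
  proof (cases "\<beta> (Suc i) \<le> gS \<beta> c i + c (Suc i)")
    case True
    then have "gS \<beta> c (Suc i) = \<beta> (Suc i) + (\<Sum>l=Suc i+1..Suc i. c l)" by simp
    then show ?thesis by (intro disjI2 exI[of _ "Suc i"]) simp
  next
    case False
    then have e: "gS \<beta> c (Suc i) = gS \<beta> c i + c (Suc i)" by simp
    from Suc.IH show ?thesis
    proof
      assume "gS \<beta> c i = (\<Sum>l=1..i. c l)"
      then show ?thesis using e by simp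
    next
      assume "\<exists>k. 1 \<le> k \<and> k \<le> i \<and> gS \<beta> c i = \<beta> k + (\<Sum>l=k+1..i. c l)"
      then obtain k where k: "1 \<le> k" "k \<le> i" "gS \<beta> c i = \<beta> k + (\<Sum>l=k+1..i. c l)" by blast
      then have "gS \<beta> c (Suc i) = \<beta> k + (\<Sum>l=k+1..Suc i. c l)" using e by simp
      then show ?thesis using k by (intro disjI2 exI[of _ k]) simp
    qed
  qed
qed

lemma FL:
  fixes c :: "nat \<Rightarrow> nat"
  assumes mono_b: "\<And>i. 1 \<le> i \<Longrightarrow> i < n \<Longrightarrow> \<beta> i \<le> \<beta> (i + 1)"
    and cb: "\<And>l. 1 \<le> l \<Longrightarrow> l \<le> n \<Longrightarrow> c l \<le> b l"
    and h0: "\<And>i. 1 \<le> i \<Longrightarrow> i \<le> n \<Longrightarrow> \<alpha> i \<le> (\<Sum>l=1..i. c l)"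
    and h1: "\<And>i k. 1 \<le> k \<Longrightarrow> k \<le> i \<Longrightarrow> i \<le> n \<Longrightarrow> \<alpha> i \<le> \<beta> k + (\<Sum>l=k+1..i. c l)"
  shows "\<exists>u\<in>Gs n b \<alpha> \<beta>. \<forall>l. Poly_Mapping.lookup u l \<le> c l"
proof -
  define S where "S = gS \<beta> c"
  have Sb: "S i \<le> \<beta> i" if "1 \<le> i" for i
    using that unfolding S_def by (cases i) auto
  have Sm: "S (k - 1) \<le> S k" if "1 \<le> k" "k \<le> n" for k
  proof (cases k)
    case 0 then show ?thesis using that by simp
  next
    case (Suc k')
    have "S k' \<le> \<beta> (Suc k')"
    proof (cases k')
      case 0 then show ?thesis by (simp add: S_def)
    next
      case (Suc k'')
      then have "S k' \<le> \<beta> k'" using Sb by simp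
      also have "\<dots> \<le> \<beta> (Suc k')" using mono_b[of k'] Suc \<open>k = Suc k'\<close> that by simp
      finally show ?thesis .
    qed
    then show ?thesis using Suc unfolding S_def by simp
  qed
  have Sc: "S k \<le> S (k - 1) + c k" if "1 \<le> k" for k
    using that unfolding S_def by (cases k) auto
  have Sa: "\<alpha> i \<le> S i" if "1 \<le> i" "i \<le> n" for i
  proof -
    from gS_repr[of \<beta> c i] show ?thesis
    proof
      assume "gS \<beta> c i = (\<Sum>l=1..i. c l)"
      then show ?thesis using h0[OF that] unfolding S_def by simp
    next
      assume "\<exists>k. 1 \<le> k \<and> k \<le> i \<and> gS \<beta> c i = \<beta> k + (\<Sum>l=k+1..i. c l)"
      then obtain k where k: "1 \<le> k" "k \<le> i" "gS \<beta> c i = \<beta> k + (\<Sum>l=k+1..i. c l)" by blast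
      then show ?thesis using h1[of k i] that unfolding S_def by simp
    qed
  qed
  define u where "u = mk (\<lambda>l. S l - S (l - 1)) n"
  have su: "(\<Sum>k=1..i. Poly_Mapping.lookup u k) = S i" if "i \<le> n" for i
  proof -
    have "(\<Sum>k=1..i. Poly_Mapping.lookup u k) = (\<Sum>k=1..i. S k - S (k - 1))"
      unfolding u_def using that by (rule sum_mk)
    also have "\<dots> = S 0 + (\<Sum>k=1..i. S k - S (k - 1))" by (simp add: S_def)
    also have "\<dots> = S i" by (rule tele) (use Sm that in auto)
    finally show ?thesis .
  qed
  have uc: "Poly_Mapping.lookup u l \<le> c l" for l
  proof (cases "l \<in> {1..n}")
    case True
    then have "S l \<le> S (l - 1) + c l" using Sc[of l] by simp
    then show ?thesis unfolding u_def lookup_mk using True by simp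
  next
    case False
    show ?thesis unfolding u_def lookup_mk by (subst if_not_P[OF False]) simp
  qed
  have "u \<in> Gs n b \<alpha> \<beta>"
    unfolding Gs_def mem_Collect_eq
  proof (intro conjI ballI)
    show "Poly_Mapping.keys u \<subseteq> {1..n}" unfolding u_def by (rule keys_mk)
    fix i assume i: "i \<in> {1..n}"
    show "Poly_Mapping.lookup u i \<le> b i" using uc[of i] cb[of i] i by simp
    show "\<alpha> i \<le> (\<Sum>k=1..i. Poly_Mapping.lookup u k)" using su[of i] Sa[of i] i by simp
    show "(\<Sum>k=1..i. Poly_Mapping.lookup u k) \<le> \<beta> i" using su[of i] Sb[of i] i by simp
  qed
  then show ?thesis using uc by blast
qed




lemma Gs_facts:
  assumes "u \<in> Gs n b \<alpha> \<beta>" "i \<in> {1..n}"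
  shows "Poly_Mapping.lookup u i \<le> b i" "\<alpha> i \<le> (\<Sum>k=1..i. Poly_Mapping.lookup u k)"
    "(\<Sum>k=1..i. Poly_Mapping.lookup u k) \<le> \<beta> i"
  using assms unfolding Gs_def by auto

lemma sum_ind: "(j::nat) \<in> {a..i} \<Longrightarrow> (\<Sum>l=a..i. (if l = j then 1 else 0::nat)) = 1"
  by (subst sum.delta) auto

lemma socle_conds:
  fixes n d :: nat and b \<alpha> \<beta> :: "nat \<Rightarrow> nat"
  assumes n1: "n \<ge> 1"
    and mb: "\<And>i. 1 \<le> i \<Longrightarrow> i < n \<Longrightarrow> \<beta> i \<le> \<beta> (i + 1)"
    and an: "\<alpha> n = d" and bn: "\<beta> n = d"
    and wn: "w \<notin> Up (Gs n b \<alpha> \<beta>)" and wu: "\<forall>i\<in>{1..n}. w + ee i \<in> Up (Gs n b \<alpha> \<beta>)"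
  shows "(\<forall>i\<in>{1..n}. b i \<ge> 1) \<and>
     (\<forall>i. 2 \<le> i \<and> i \<le> n - 1 \<longrightarrow> \<alpha> i + 1 \<le> \<beta> i) \<and>
     (\<forall>i j. 1 \<le> i \<and> i \<le> j \<and> j \<le> n - 1 \<longrightarrow>
        \<beta> i + (\<Sum>k=i+1..j. b k) \<ge> \<alpha> j + j - i + 1) \<and>
     (\<forall>i\<in>{1..n}. \<beta> i + (\<Sum>k=i+1..n. b k) \<ge> d + n - i)"
proof -
  define G where "G = Gs n b \<alpha> \<beta>"
  define lw where "lw = Poly_Mapping.lookup w"
  define W where "W i = (\<Sum>l=1..i. lw l)" for i
  define su where "su u i = (\<Sum>l=1..i. Poly_Mapping.lookup u l)" for u :: "nat \<Rightarrow>\<^sub>0 nat" and i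
  have gen: "\<exists>u. u \<in> G \<and> Poly_Mapping.lookup u j = lw j + 1 \<and>
      (\<forall>l. l \<noteq> j \<longrightarrow> Poly_Mapping.lookup u l \<le> lw l)" if j: "j \<in> {1..n}" for j
  proof -
    obtain u where u: "u \<in> G" "dvm u (w + ee j)" using wu j unfolding Up_def G_def by blast
    have le: "Poly_Mapping.lookup u l \<le> lw l + (if l = j then 1 else 0)" for l
    proof -
      have "Poly_Mapping.lookup u l \<le> Poly_Mapping.lookup (w + ee j) l" using u(2) unfolding dvm_def by blast
      then show ?thesis unfolding lw_def by (auto simp: lookup_add lookup_single when_def)
    qed
    have nle: "\<not> Poly_Mapping.lookup u j \<le> lw j"
    proof
      assume a: "Poly_Mapping.lookup u j \<le> lw j"
      have "dvm u w" unfolding dvm_def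
      proof
        fix l show "Poly_Mapping.lookup u l \<le> Poly_Mapping.lookup w l"
          using le[of l] a unfolding lw_def by (cases "l = j") auto
      qed
      then show False using wn u(1) unfolding Up_def G_def by blast
    qed
    have "Poly_Mapping.lookup u j = lw j + 1" using nle le[of j] by simp
    moreover have "\<forall>l. l \<noteq> j \<longrightarrow> Poly_Mapping.lookup u l \<le> lw l"
    proof (intro allI impI)
      fix l assume "l \<noteq> j" then show "Poly_Mapping.lookup u l \<le> lw l" using le[of l] by simp
    qed
    ultimately show ?thesis using u(1) by blast
  qed
  have Sa: "(\<Sum>l=a..i. Poly_Mapping.lookup u l) \<le> (\<Sum>l=a..i. lw l)"
    if "\<forall>l. l \<noteq> j \<longrightarrow> Poly_Mapping.lookup u l \<le> lw l" "j \<notin> {a..i}" for u j a i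
    by (rule sum_mono) (use that in auto)
  have Sb: "(\<Sum>l=a..i. Poly_Mapping.lookup u l) \<le> (\<Sum>l=a..i. lw l) + 1"
    if "\<forall>l. l \<noteq> j \<longrightarrow> Poly_Mapping.lookup u l \<le> lw l" "Poly_Mapping.lookup u j = lw j + 1"
       "j \<in> {a..i}" for u j a i
  proof -
    have "(\<Sum>l=a..i. Poly_Mapping.lookup u l) \<le> (\<Sum>l=a..i. lw l + (if l = j then 1 else 0))"
      by (rule sum_mono) (use that in auto)
    also have "\<dots> = (\<Sum>l=a..i. lw l) + 1" using sum_ind[OF that(3)] by (simp add: sum.distrib)
    finally show ?thesis .
  qed
  have step1: "lw j + 1 \<le> b j" if "j \<in> {1..n}" for j
    using gen[OF that] Gs_facts(1)[OF _ that, of _ b \<alpha> \<beta>] unfolding G_def by force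
  have n_in: "n \<in> {1..n}" "1 \<in> {1..n}" using n1 by auto
  obtain un where un: "un \<in> G" "Poly_Mapping.lookup un n = lw n + 1"
      "\<forall>l. l \<noteq> n \<longrightarrow> Poly_Mapping.lookup un l \<le> lw l" using gen[OF n_in(1)] by blast
  obtain u1 where u1: "u1 \<in> G" "Poly_Mapping.lookup u1 1 = lw 1 + 1"
      "\<forall>l. l \<noteq> 1 \<longrightarrow> Poly_Mapping.lookup u1 l \<le> lw l" using gen[OF n_in(2)] by blast
  have step3: "\<alpha> i \<le> W i" if "1 \<le> i" "i < n" for i
  proof -
    have "\<alpha> i \<le> (\<Sum>k=1..i. Poly_Mapping.lookup un k)" using Gs_facts(2)[of un n b \<alpha> \<beta> i] un(1) that
      unfolding G_def by simp
    also have "\<dots> \<le> W i" unfolding W_def by (rule Sa[OF un(3)]) (use that in simp)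
    finally show ?thesis .
  qed
  have stepUp: "d \<le> W n + 1"
  proof -
    have "d \<le> (\<Sum>k=1..n. Poly_Mapping.lookup u1 k)" using Gs_facts(2)[of u1 n b \<alpha> \<beta> n] u1(1) n_in an
      unfolding G_def by simp
    also have "\<dots> \<le> W n + 1" unfolding W_def by (rule Sb[OF u1(3) u1(2)]) (use n1 in simp)
    finally show ?thesis .
  qed
  have step2: "W n < d"
  proof (rule ccontr)
    assume "\<not> W n < d"
    then have dW: "d \<le> W n" by simp
    have "\<exists>u\<in>Gs n b \<alpha> \<beta>. \<forall>l. Poly_Mapping.lookup u l \<le> lw l"
    proof (rule FL)
      show "\<beta> i \<le> \<beta> (i + 1)" if "1 \<le> i" "i < n" for i using mb that .
      show "lw l \<le> b l" if "1 \<le> l" "l \<le> n" for l using step1[of l] that by simp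
      show "\<alpha> i \<le> (\<Sum>l=1..i. lw l)" if "1 \<le> i" "i \<le> n" for i
      proof (cases "i = n")
        case True then show ?thesis using dW an unfolding W_def by simp
      next
        case False then show ?thesis using step3[of i] that unfolding W_def by simp
      qed
      show "\<alpha> i \<le> \<beta> k + (\<Sum>l=k+1..i. lw l)" if "1 \<le> k" "k \<le> i" "i \<le> n" for i k
      proof -
        have kin: "k \<in> {1..n}" using that by simp
        obtain uk where uk: "uk \<in> G" "Poly_Mapping.lookup uk k = lw k + 1"
          "\<forall>l. l \<noteq> k \<longrightarrow> Poly_Mapping.lookup uk l \<le> lw l" using gen[OF kin] by blast
        have "\<alpha> i \<le> (\<Sum>l=1..i. Poly_Mapping.lookup uk l)"
          using Gs_facts(2)[of uk n b \<alpha> \<beta> i] uk(1) that unfolding G_def by simp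
        also have "\<dots> = (\<Sum>l=1..k. Poly_Mapping.lookup uk l) + (\<Sum>l=Suc k..i. Poly_Mapping.lookup uk l)"
          by (rule sum_split) (use that in auto)
        also have "\<dots> \<le> \<beta> k + (\<Sum>l=k+1..i. lw l)"
        proof (rule add_mono)
          show "(\<Sum>l=1..k. Poly_Mapping.lookup uk l) \<le> \<beta> k"
            using Gs_facts(3)[of uk n b \<alpha> \<beta> k] uk(1) kin unfolding G_def by simp
          show "(\<Sum>l=Suc k..i. Poly_Mapping.lookup uk l) \<le> (\<Sum>l=k+1..i. lw l)"
            using Sa[OF uk(3), of "Suc k" i] by simp
        qed
        finally show ?thesis .
      qed
    qed
    then obtain u where u: "u \<in> Gs n b \<alpha> \<beta>" "\<forall>l. Poly_Mapping.lookup u l \<le> lw l" by blast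
    then have "dvm u w" unfolding dvm_def lw_def by blast
    then show False using u(1) wn unfolding Up_def by blast
  qed
  have Wn: "W n + 1 = d" using step2 stepUp by simp
  have Wsplit: "W j = W i + (\<Sum>l=i+1..j. lw l)" if "i \<le> j" for i j
    unfolding W_def using sum_split[of 1 i j lw] that by simp
  have step4: "W i + 1 \<le> \<beta> i" if "1 \<le> i" "i < n" for i
  proof -
    have iin: "i \<in> {1..n}" using that by simp
    have "d \<le> (\<Sum>l=1..n. Poly_Mapping.lookup u1 l)"
      using Gs_facts(2)[of u1 n b \<alpha> \<beta> n] u1(1) n_in an unfolding G_def by simp
    also have "\<dots> = (\<Sum>l=1..i. Poly_Mapping.lookup u1 l) + (\<Sum>l=Suc i..n. Poly_Mapping.lookup u1 l)"
      by (rule sum_split) (use that in auto)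
    also have "\<dots> \<le> \<beta> i + (\<Sum>l=i+1..n. lw l)"
    proof (rule add_mono)
      show "(\<Sum>l=1..i. Poly_Mapping.lookup u1 l) \<le> \<beta> i"
        using Gs_facts(3)[of u1 n b \<alpha> \<beta> i] u1(1) iin unfolding G_def by simp
      show "(\<Sum>l=Suc i..n. Poly_Mapping.lookup u1 l) \<le> (\<Sum>l=i+1..n. lw l)"
        using Sa[OF u1(3), of "Suc i" n] that by simp
    qed
    finally have "d \<le> \<beta> i + (\<Sum>l=i+1..n. lw l)" .
    moreover have "W n = W i + (\<Sum>l=i+1..n. lw l)" using Wsplit[of i n] that by simp
    ultimately show ?thesis using Wn by linarith
  qed
  have Tb: "(\<Sum>l=i+1..j. lw l) + (j - i) \<le> (\<Sum>l=i+1..j. b l)" if "1 \<le> i" "j \<le> n" for i j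
  proof -
    have e: "(\<Sum>l=i+1..j. lw l + 1) = (\<Sum>l=i+1..j. lw l) + (\<Sum>l=i+1..j. (1::nat))"
      by (rule sum.distrib)
    have "(\<Sum>l=i+1..j. lw l) + (j - i) = (\<Sum>l=i+1..j. lw l + 1)" unfolding e by simp
    also have "\<dots> \<le> (\<Sum>l=i+1..j. b l)" by (rule sum_mono) (use step1 that in auto)
    finally show ?thesis .
  qed
  show ?thesis
  proof (intro conjI allI ballI impI)
    fix i assume "i \<in> {1..n}" then show "1 \<le> b i" using step1[of i] by simp
  next
    fix i assume i: "2 \<le> i \<and> i \<le> n - 1"
    then have "i < n" "1 \<le> i" using n1 by auto
    then show "\<alpha> i + 1 \<le> \<beta> i" using step3[of i] step4[of i] by simp
  next
    fix i j assume ij: "1 \<le> i \<and> i \<le> j \<and> j \<le> n - 1"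
    then have "\<alpha> j \<le> W j" "W i + 1 \<le> \<beta> i" using step3[of j] step4[of i] n1 by auto
    moreover have "W j = W i + (\<Sum>l=i+1..j. lw l)" using Wsplit[of i j] ij by simp
    moreover have "(\<Sum>l=i+1..j. lw l) + (j - i) \<le> (\<Sum>l=i+1..j. b l)" proof -
      have "j \<le> n" using ij by linarith
      then show ?thesis using Tb[of i j] ij by simp
    qed
    ultimately show "\<alpha> j + j - i + 1 \<le> \<beta> i + (\<Sum>k=i+1..j. b k)" using ij by linarith
  next
    fix i assume i: "i \<in> {1..n}"
    show "d + n - i \<le> \<beta> i + (\<Sum>k=i+1..n. b k)"
    proof (cases "i = n")
      case True then show ?thesis using bn by simp
    next
      case False
      then have "W i + 1 \<le> \<beta> i" using step4[of i] i by simp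
      moreover have "W n = W i + (\<Sum>l=i+1..n. lw l)" using Wsplit[of i n] i by simp
      moreover have "(\<Sum>l=i+1..n. lw l) + (n - i) \<le> (\<Sum>l=i+1..n. b l)" using Tb[of i n] i by simp
      ultimately show ?thesis using Wn i by simp
    qed
  qed
qed




primrec gV :: "(nat \<Rightarrow> nat) \<Rightarrow> (nat \<Rightarrow> nat) \<Rightarrow> nat \<Rightarrow> nat" where
  "gV \<beta> b 0 = 0"
| "gV \<beta> b (Suc i) = min (\<beta> (Suc i) - 1) (gV \<beta> b i + b (Suc i) - 1)"

lemma conds_socle:
  fixes n d :: nat and b \<alpha> \<beta> :: "nat \<Rightarrow> nat"
  assumes n1: "n \<ge> 1"
    and mb: "\<And>i. 1 \<le> i \<Longrightarrow> i < n \<Longrightarrow> \<beta> i \<le> \<beta> (i + 1)"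
    and an: "\<alpha> n = d" and bn: "\<beta> n = d"
    and a1: "\<alpha> 1 = 0" and b1: "\<beta> 1 = b 1"
    and c1: "\<forall>i\<in>{1..n}. b i \<ge> 1"
    and c3: "\<forall>i j. 1 \<le> i \<and> i \<le> j \<and> j \<le> n - 1 \<longrightarrow>
        \<beta> i + (\<Sum>k=i+1..j. b k) \<ge> \<alpha> j + j - i + 1"
    and c4: "\<forall>i\<in>{1..n}. \<beta> i + (\<Sum>k=i+1..n. b k) \<ge> d + n - i"
  shows "\<exists>w. Poly_Mapping.keys w \<subseteq> {1..n} \<and> w \<notin> Up (Gs n b \<alpha> \<beta>) \<and>
     (\<forall>i\<in>{1..n}. w + ee i \<in> Up (Gs n b \<alpha> \<beta>))"
proof -
  have n2: "n \<ge> 2"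
  proof (rule ccontr)
    assume "\<not> n \<ge> 2"
    then have "n = 1" using n1 by simp
    then show False using c1 an bn a1 b1 by auto
  qed
  have c3': "\<alpha> j + (j - i) + 1 \<le> \<beta> i + (\<Sum>k=i+1..j. b k)" if "1 \<le> i" "i \<le> j" "j < n" for i j
    using c3 that by (metis One_nat_def Nat.add_diff_assoc less_Suc_eq_le Suc_pred n1 le_less_trans
        less_le_trans not_le)
  have c4': "d + (n - i) \<le> \<beta> i + (\<Sum>k=i+1..n. b k)" if "1 \<le> i" "i \<le> n" for i
    using c4 that by auto
  have bpos: "1 \<le> \<beta> i" if "1 \<le> i" "i < n" for i
    using c3'[of i i] that by simp
  have d1: "d \<ge> 1"
  proof -
    have "1 \<le> \<beta> (n - 1)" using bpos[of "n - 1"] n2 by simp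
    also have "\<dots> \<le> \<beta> (n - 1 + 1)" using mb[of "n - 1"] n2 by simp
    finally show ?thesis using bn n2 by simp
  qed
  define V where "V = gV \<beta> b"
  define al where "al j = (if j < n then \<alpha> j else d - 1)" for j
  have Vb: "V i + 1 \<le> \<beta> i" if "1 \<le> i" "i < n" for i
    using that bpos[OF that] unfolding V_def by (cases i) auto
  have Vm: "V (i - 1) \<le> V i" if "1 \<le> i" "i < n" for i
  proof (cases i)
    case 0 then show ?thesis using that by simp
  next
    case (Suc i')
    have "V i' \<le> \<beta> (Suc i') - 1"
    proof (cases i')
      case 0 then show ?thesis by (simp add: V_def)
    next
      case (Suc i'')
      then have "V i' + 1 \<le> \<beta> i'" using Vb[of i'] that \<open>i = Suc i'\<close> by simp
      moreover have "\<beta> i' \<le> \<beta> (Suc i')" using mb[of i'] Suc that \<open>i = Suc i'\<close> by simp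
      ultimately show ?thesis by simp
    qed
    moreover have "1 \<le> b (Suc i')" using c1 that Suc by simp
    ultimately show ?thesis using Suc unfolding V_def by simp
  qed
  have Vc: "V i + 1 \<le> V (i - 1) + b i" if "1 \<le> i" "i < n" for i
  proof (cases i)
    case 0 then show ?thesis using that by simp
  next
    case (Suc i')
    have "1 \<le> b (Suc i')" using c1 that Suc by simp
    then show ?thesis using Suc unfolding V_def by simp
  qed
  have Q: "\<forall>j. 1 \<le> j \<longrightarrow> i \<le> j \<longrightarrow> j \<le> n \<longrightarrow> al j + (j - i) \<le> V i + (\<Sum>l=i+1..j. b l)"
    if "i < n" for i
    using that
  proof (induction i)
    case 0
    show ?case
    proof (intro allI impI)
      fix j assume j: "1 \<le> j" "0 \<le> j" "j \<le> n"
      have e: "(\<Sum>l=1..j. b l) = \<beta> 1 + (\<Sum>l=1+1..j. b l)" using b1 sum_split[of 1 1 j b] j by simp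
      show "al j + (j - 0) \<le> V 0 + (\<Sum>l=0+1..j. b l)"
      proof (cases "j < n")
        case True
        then show ?thesis using c3'[of 1 j] j e unfolding al_def V_def by simp
      next
        case False
        then have "j = n" using j by simp
        then show ?thesis using c4'[of 1] j e d1 unfolding al_def V_def by simp
      qed
    qed
  next
    case (Suc i)
    have IH: "\<forall>j. 1 \<le> j \<longrightarrow> i \<le> j \<longrightarrow> j \<le> n \<longrightarrow> al j + (j - i) \<le> V i + (\<Sum>l=i+1..j. b l)"
      using Suc by simp
    show ?case
    proof (intro allI impI)
      fix j assume j: "1 \<le> j" "Suc i \<le> j" "j \<le> n"
      have bs: "1 \<le> b (Suc i)" using c1 Suc.prems by simp
      have bps: "1 \<le> \<beta> (Suc i)" using bpos[of "Suc i"] Suc.prems by simp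
      have es: "(\<Sum>l=i+1..j. b l) = b (Suc i) + (\<Sum>l=Suc i+1..j. b l)"
        using sum_split[of "Suc i" "Suc i" j b] j by simp
      have A: "al j + (j - Suc i) \<le> \<beta> (Suc i) - 1 + (\<Sum>l=Suc i+1..j. b l)"
      proof (cases "j < n")
        case True
        then show ?thesis using c3'[of "Suc i" j] j bps unfolding al_def by simp
      next
        case False
        then have "j = n" using j by simp
        then show ?thesis using c4'[of "Suc i"] j d1 bps unfolding al_def by simp
      qed
      have B: "al j + (j - Suc i) \<le> V i + b (Suc i) - 1 + (\<Sum>l=Suc i+1..j. b l)"
        using IH[rule_format, of j] j es bs by simp
      have "V (Suc i) = min (\<beta> (Suc i) - 1) (V i + b (Suc i) - 1)" unfolding V_def by simp
      then show "al j + (j - Suc i) \<le> V (Suc i) + (\<Sum>l=Suc i+1..j. b l)"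
        using A B by (simp add: min_def)
    qed
  qed
  define Vt where "Vt l = (if l < n then V l else d - 1)" for l
  have Vt0: "Vt 0 = 0" using n1 unfolding Vt_def V_def by simp
  have Vtm: "Vt (l - 1) \<le> Vt l" if "1 \<le> l" "l \<le> n" for l
  proof (cases "l < n")
    case True then show ?thesis using Vm[OF that(1) True] unfolding Vt_def by simp
  next
    case False
    then have l: "l = n" using that by simp
    have "V (n - 1) + 1 \<le> \<beta> (n - 1)" using Vb[of "n - 1"] n2 by simp
    moreover have "\<beta> (n - 1) \<le> \<beta> (n - 1 + 1)" using mb[of "n - 1"] n2 by simp
    ultimately have "V (n - 1) \<le> d - 1" using bn n2 by simp
    then show ?thesis using l n2 unfolding Vt_def by simp
  qed
  define w where "w = mk (\<lambda>l. Vt l - Vt (l - 1)) n"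
  have sw: "(\<Sum>k=1..i. Poly_Mapping.lookup w k) = Vt i" if "i \<le> n" for i
  proof -
    have "(\<Sum>k=1..i. Poly_Mapping.lookup w k) = (\<Sum>k=1..i. Vt k - Vt (k - 1))"
      unfolding w_def using that by (rule sum_mk)
    also have "\<dots> = Vt 0 + (\<Sum>k=1..i. Vt k - Vt (k - 1))" using Vt0 by simp
    also have "\<dots> = Vt i" by (rule tele) (use Vtm that in auto)
    finally show ?thesis .
  qed
  have wb: "Poly_Mapping.lookup w l + 1 \<le> b l" if "1 \<le> l" "l \<le> n" for l
  proof (cases "l < n")
    case True
    have "Vt l + 1 \<le> Vt (l - 1) + b l"
    proof (cases "l - 1 < n")
      case True
      then show ?thesis using Vc[OF that(1) \<open>l < n\<close>] \<open>l < n\<close> unfolding Vt_def by simp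
    next
      case False then show ?thesis using \<open>l < n\<close> by simp
    qed
    then show ?thesis unfolding w_def lookup_mk using that Vtm[OF that] by simp
  next
    case False
    then have l: "l = n" using that by simp
    have "al n + (n - (n - 1)) \<le> V (n - 1) + (\<Sum>l=n - 1 + 1..n. b l)"
      using Q[of "n - 1", rule_format, of n] n2 by simp
    then have "d - 1 + 1 \<le> V (n - 1) + b n" using n2 unfolding al_def by simp
    then have "Vt n + 1 \<le> Vt (n - 1) + b n" using n2 d1 unfolding Vt_def by simp
    then show ?thesis unfolding w_def lookup_mk using that l Vtm[OF that] by simp
  qed
  have Va: "\<alpha> i \<le> V i" if "1 \<le> i" "i < n" for i
    using Q[OF that(2), rule_format, of i] that unfolding al_def by simp
  have wk: "Poly_Mapping.keys w \<subseteq> {1..n}" unfolding w_def by (rule keys_mk)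
  have wn: "w \<notin> Up (Gs n b \<alpha> \<beta>)"
  proof
    assume "w \<in> Up (Gs n b \<alpha> \<beta>)"
    then obtain u where u: "u \<in> Gs n b \<alpha> \<beta>" "dvm u w" unfolding Up_def by blast
    have "d \<le> (\<Sum>k=1..n. Poly_Mapping.lookup u k)" using Gs_facts(2)[OF u(1), of n] n1 an by simp
    also have "\<dots> \<le> (\<Sum>k=1..n. Poly_Mapping.lookup w k)"
      by (rule sum_mono) (use u(2) in \<open>simp add: dvm_def\<close>)
    also have "\<dots> = d - 1" using sw[of n] unfolding Vt_def by simp
    finally show False using d1 by simp
  qed
  have wu: "w + ee j \<in> Up (Gs n b \<alpha> \<beta>)" if j: "j \<in> {1..n}" for j
  proof -
    have "w + ee j \<in> Gs n b \<alpha> \<beta>"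
      unfolding Gs_def mem_Collect_eq
    proof (intro conjI ballI)
      show "Poly_Mapping.keys (w + ee j) \<subseteq> {1..n}" using wk j by (simp add: keys_add_nat)
      fix i assume i: "i \<in> {1..n}"
      show "Poly_Mapping.lookup (w + ee j) i \<le> b i"
        using wb[of i] i by (auto simp: lookup_add lookup_single when_def)
      have "(\<Sum>k=1..i. Poly_Mapping.lookup (w + ee j) k) =
          (\<Sum>k=1..i. Poly_Mapping.lookup w k) + (\<Sum>k=1..i. Poly_Mapping.lookup (ee j) k)"
        by (simp add: lookup_add sum.distrib)
      also have "(\<Sum>k=1..i. Poly_Mapping.lookup (ee j) k) = (if j \<le> i then 1 else 0)"
        using j by (simp add: lookup_single when_def sum.delta)
      finally have e: "(\<Sum>k=1..i. Poly_Mapping.lookup (w + ee j) k) = Vt i + (if j \<le> i then 1 else 0)"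
        using sw[of i] i by simp
      show "\<alpha> i \<le> (\<Sum>k=1..i. Poly_Mapping.lookup (w + ee j) k)"
      proof (cases "i < n")
        case True then show ?thesis using e Va[of i] i unfolding Vt_def by simp
      next
        case False then have "i = n" using i by simp
        then show ?thesis using e j an d1 unfolding Vt_def by simp
      qed
      show "(\<Sum>k=1..i. Poly_Mapping.lookup (w + ee j) k) \<le> \<beta> i"
      proof (cases "i < n")
        case True then show ?thesis using e Vb[of i] i unfolding Vt_def by simp
      next
        case False then have "i = n" using i by simp
        then show ?thesis using e j bn d1 unfolding Vt_def by simp
      qed
    qed
    moreover have "dvm (w + ee j) (w + ee j)" unfolding dvm_def by simp
    ultimately show ?thesis unfolding Up_def by blast
  qed
  show ?thesis using wk wn wu by blast
qed



theorem corollary3p4: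
  fixes n d :: nat and b \<alpha> \<beta> :: "nat \<Rightarrow> nat"
  assumes "n \<ge> 1"
    and "\<And>i. 1 \<le> i \<Longrightarrow> i < n \<Longrightarrow> \<alpha> i \<le> \<alpha> (i + 1)"
    and "\<And>i. 1 \<le> i \<Longrightarrow> i < n \<Longrightarrow> \<beta> i \<le> \<beta> (i + 1)"
    and "\<alpha> n = d" and "\<beta> n = d"
    and "\<And>i. 1 \<le> i \<Longrightarrow> i \<le> n \<Longrightarrow> \<alpha> i \<le> \<beta> i"
    and "\<alpha> 1 = 0" and "\<beta> 1 = b 1"
  shows "depth_zero n (plp_ideal n b \<alpha> \<beta> :: 'k::field mpoly set) \<longleftrightarrow>
     (\<forall>i\<in>{1..n}. b i \<ge> 1) \<and>
     (\<forall>i. 2 \<le> i \<and> i \<le> n - 1 \<longrightarrow> \<alpha> i + 1 \<le> \<beta> i) \<and>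
     (\<forall>i j. 1 \<le> i \<and> i \<le> j \<and> j \<le> n - 1 \<longrightarrow>
        \<beta> i + (\<Sum>k=i+1..j. b k) \<ge> \<alpha> j + j - i + 1) \<and>
     (\<forall>i\<in>{1..n}. \<beta> i + (\<Sum>k=i+1..n. b k) \<ge> d + n - i)"
proof -
  define G where "G = Gs n b \<alpha> \<beta>"
  have A: "\<And>u. u \<in> G \<Longrightarrow> Poly_Mapping.keys u \<subseteq> {1..n}" unfolding G_def Gs_def by blast
  have I: "plp_ideal n b \<alpha> \<beta> = ideal_gen n (monom ` G)"
    unfolding plp_ideal_def G_def Gs_def by (simp only: setcompr_eq_image)
  have D: "depth_zero n (plp_ideal n b \<alpha> \<beta> :: 'k mpoly set) \<longleftrightarrow>
     (\<exists>w. Poly_Mapping.keys w \<subseteq> {1..n} \<and> w \<notin> Up G \<and> (\<forall>i\<in>{1..n}. w + ee i \<in> Up G))"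
  proof -
    have e: "depth_zero n (ideal_gen n (monom ` G) :: 'k mpoly set) \<longleftrightarrow>
      (1::'k mpoly) \<notin> ideal_gen n (monom ` G) \<and>
      (\<exists>w. Poly_Mapping.keys w \<subseteq> {1..n} \<and> w \<notin> Up G \<and> (\<forall>i\<in>{1..n}. w + ee i \<in> Up G))"
      by (rule depth_iff[OF A])
    have one: "(1::'k mpoly) \<notin> ideal_gen n (monom ` G)"
      if ex: "\<exists>w. Poly_Mapping.keys w \<subseteq> {1..n} \<and> w \<notin> Up G \<and> (\<forall>i\<in>{1..n}. w + ee i \<in> Up G)"
    proof
      assume "(1::'k mpoly) \<in> ideal_gen n (monom ` G)"
      then have "Poly_Mapping.keys (1::'k mpoly) \<subseteq> Up G" using L1[OF A] by blast
      then have z: "0 \<in> Up G" by simp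
      obtain w where w: "w \<notin> Up G" using ex by blast
      have "dvm 0 w" by (simp add: dvm_def)
      then have "w \<in> Up G" by (rule Up_mono[OF z])
      then show False using w by simp
    qed
    show ?thesis unfolding I e using one by blast
  qed
  show ?thesis
  proof
    assume "depth_zero n (plp_ideal n b \<alpha> \<beta> :: 'k mpoly set)"
    then obtain w where w: "w \<notin> Up G" "\<forall>i\<in>{1..n}. w + ee i \<in> Up G" unfolding D by blast
    show "(\<forall>i\<in>{1..n}. b i \<ge> 1) \<and>
     (\<forall>i. 2 \<le> i \<and> i \<le> n - 1 \<longrightarrow> \<alpha> i + 1 \<le> \<beta> i) \<and>
     (\<forall>i j. 1 \<le> i \<and> i \<le> j \<and> j \<le> n - 1 \<longrightarrow>
        \<beta> i + (\<Sum>k=i+1..j. b k) \<ge> \<alpha> j + j - i + 1) \<and>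
     (\<forall>i\<in>{1..n}. \<beta> i + (\<Sum>k=i+1..n. b k) \<ge> d + n - i)"
      by (rule socle_conds[OF assms(1) assms(3) assms(4) assms(5) w[unfolded G_def]])
  next
    assume R: "(\<forall>i\<in>{1..n}. b i \<ge> 1) \<and>
     (\<forall>i. 2 \<le> i \<and> i \<le> n - 1 \<longrightarrow> \<alpha> i + 1 \<le> \<beta> i) \<and>
     (\<forall>i j. 1 \<le> i \<and> i \<le> j \<and> j \<le> n - 1 \<longrightarrow>
        \<beta> i + (\<Sum>k=i+1..j. b k) \<ge> \<alpha> j + j - i + 1) \<and>
     (\<forall>i\<in>{1..n}. \<beta> i + (\<Sum>k=i+1..n. b k) \<ge> d + n - i)"
    have "\<exists>w. Poly_Mapping.keys w \<subseteq> {1..n} \<and> w \<notin> Up (Gs n b \<alpha> \<beta>) \<and>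
     (\<forall>i\<in>{1..n}. w + ee i \<in> Up (Gs n b \<alpha> \<beta>))"
      using R by (intro conds_socle[where n=n and d=d and b=b and \<alpha>=\<alpha> and \<beta>=\<beta>, OF assms(1) assms(3) assms(4) assms(5) assms(7) assms(8)]) auto
    then show "depth_zero n (plp_ideal n b \<alpha> \<beta> :: 'k mpoly set)" unfolding D G_def .
  qed
qed

end
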